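(* Let $r\ge1$ be an integer. There is a unique real sequence $b=(b_0,b_1,\dots)$ with $b_0=1$ such that the leading diagonal of the difference table of depth $r$ of $b$ equals $(1,b_0,b_1,b_2,\dots)$. This sequence is $b_n=a_{n+1}$, where $(a_n)$ is defined by $a_0=1$, $a_{n+1}=\sum_{k=0}^n\binom nk r^{n-k}a_k$. In particular, for $r=1$, $b=(1,2,5,15,52,\dots)$ is the sequence of Bell numbers $B_1,B_2,\dots$.
   Context: The difference table of depth 1 of a sequence $c=(c_0,c_1,\dots)$ is its ordinary difference table, with top row $c$ and each subsequent row the successive differences of the row above; its leading diagonal is $(\Delta^0c_0,\Delta^1c_0,\Delta^2c_0,\dots)$ where $\Delta^mc_0=\sum_{k=0}^m(-1)^{m-k}\binom mk c_k$. The difference table of depth $r+1$ of $c$ is the difference table of depth 1 of the leading diagonal of the depth-$r$ table of $c$; its leading diagonal is the depth-$(r+1)$ leading diagonal. The Bell numbers are defined by $B_0=1$, $B_{n+1}=\sum_{k=0}^n\binom nk B_k$. *)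

theory Defs
  imports Complex_Main
begin

text \<open>Leading diagonal of the (depth 1) difference table of a real sequence c:
  entry m is Delta^m c_0 = sum_{k=0}^m (-1)^(m-k) (m choose k) c_k.\<close>
definition lead_diag :: "(nat \<Rightarrow> real) \<Rightarrow> nat \<Rightarrow> real" where
  "lead_diag c m = (\<Sum>k\<le>m. (-1) ^ (m - k) * real (m choose k) * c k)"

definition lead_diag_depth :: "nat \<Rightarrow> (nat \<Rightarrow> real) \<Rightarrow> nat \<Rightarrow> real" where
  "lead_diag_depth r c = (lead_diag ^^ r) c"

fun seq_a :: "nat \<Rightarrow> nat \<Rightarrow> nat" where
  "seq_a r 0 = 1"
| "seq_a r (Suc n) = (\<Sum>k\<le>n. (n choose k) * r ^ (n - k) * seq_a r k)"

fun bell :: "nat \<Rightarrow> nat" where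
  "bell 0 = 1"
| "bell (Suc n) = (\<Sum>k\<le>n. (n choose k) * bell k)"

end

theory Submission
  imports Defs
begin

definition T :: "real \<Rightarrow> (nat \<Rightarrow> real) \<Rightarrow> nat \<Rightarrow> real" where
  "T a c m = (\<Sum>k\<le>m. real (m choose k) * a ^ (m - k) * c k)"

lemma inner_sum:
  assumes "j \<le> m"
  shows "(\<Sum>k\<in>{j..m}. real (m choose k) * real (k choose j) * a ^ (m - k) * b ^ (k - j))
       = real (m choose j) * (a + b) ^ (m - j)"
proof -
  have "(\<Sum>k\<in>{j..m}. real (m choose k) * real (k choose j) * a ^ (m - k) * b ^ (k - j))
      = (\<Sum>k\<in>{j..m}. real (m choose j) * (real ((m - j) choose (k - j)) * b ^ (k - j) * a ^ ((m - j) - (k - j))))"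
  proof (rule sum.cong[OF refl])
    fix k assume k: "k \<in> {j..m}"
    have "(m choose k) * (k choose j) = (m choose j) * ((m - j) choose (k - j))"
      using choose_mult[of j k m] k by auto
    hence "real (m choose k) * real (k choose j) = real (m choose j) * real ((m - j) choose (k - j))"
      by (metis of_nat_mult)
    moreover have "m - k = (m - j) - (k - j)" using k by auto
    ultimately show "real (m choose k) * real (k choose j) * a ^ (m - k) * b ^ (k - j)
        = real (m choose j) * (real ((m - j) choose (k - j)) * b ^ (k - j) * a ^ ((m - j) - (k - j)))"
      by simp
  qed
  also have "\<dots> = real (m choose j) * (\<Sum>k\<in>{j..m}. real ((m - j) choose (k - j)) * b ^ (k - j) * a ^ ((m - j) - (k - j)))"
    by (simp add: sum_distrib_left)
  also have "(\<Sum>k\<in>{j..m}. real ((m - j) choose (k - j)) * b ^ (k - j) * a ^ ((m - j) - (k - j)))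
      = (\<Sum>i\<le>m - j. real ((m - j) choose i) * b ^ i * a ^ ((m - j) - i))"
  proof -
    have "{j..m} = (\<lambda>i. i + j) ` {..m - j}" using assms
    proof (safe)
      fix x assume "x \<in> {j..m}"
      thus "x \<in> (\<lambda>i. i + j) ` {..m - j}" by (intro image_eqI[of _ _ "x - j"]) auto
    qed auto
    moreover have "inj_on (\<lambda>i. i + j) {..m - j}" by (auto simp: inj_on_def)
    ultimately show ?thesis by (simp add: sum.reindex)
  qed
  also have "\<dots> = (b + a) ^ (m - j)" by (simp add: binomial_ring)
  finally show ?thesis by (simp add: add.commute)
qed

lemma T_comp: "T a (T b c) = T (a + b) c"
proof
  fix m
  have "T a (T b c) m = (\<Sum>k\<le>m. \<Sum>j\<le>k. real (m choose k) * a ^ (m - k) * (real (k choose j) * b ^ (k - j) * c j))"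
    by (simp add: T_def sum_distrib_left)
  also have "\<dots> = (\<Sum>k\<le>m. \<Sum>j\<in>{j. j \<in> {..m} \<and> j \<le> k}. real (m choose k) * a ^ (m - k) * (real (k choose j) * b ^ (k - j) * c j))"
    by (rule sum.cong[OF refl]) (rule sum.cong, auto)
  also have "\<dots> = (\<Sum>j\<le>m. \<Sum>k\<in>{k. k \<in> {..m} \<and> j \<le> k}. real (m choose k) * a ^ (m - k) * (real (k choose j) * b ^ (k - j) * c j))"
    by (rule sum.swap_restrict) auto
  also have "\<dots> = (\<Sum>j\<le>m. c j * (\<Sum>k\<in>{j..m}. real (m choose k) * real (k choose j) * a ^ (m - k) * b ^ (k - j)))"
    by (rule sum.cong[OF refl], simp add: sum_distrib_left, rule sum.cong, auto)
  also have "\<dots> = (\<Sum>j\<le>m. c j * (real (m choose j) * (a + b) ^ (m - j)))"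
    by (rule sum.cong[OF refl]) (simp add: inner_sum)
  also have "\<dots> = T (a + b) c m" by (simp add: T_def mult_ac)
  finally show "T a (T b c) m = T (a + b) c m" .
qed

lemma T_zero: "T 0 c = c"
proof
  fix m
  have "T 0 c m = (\<Sum>k\<le>m. if k = m then c m else 0)"
    unfolding T_def by (rule sum.cong) auto
  thus "T 0 c m = c m" by simp
qed

lemma lead_diag_T: "lead_diag = T (-1)"
  by (auto simp: fun_eq_iff lead_diag_def T_def mult_ac)

lemma depth_T: "lead_diag_depth r c = T (- real r) c"
proof (induction r arbitrary: c)
  case 0 thus ?case by (simp add: lead_diag_depth_def T_zero)
next
  case (Suc r)
  have "lead_diag_depth (Suc r) c = lead_diag (lead_diag_depth r c)"
    by (simp add: lead_diag_depth_def)
  also have "\<dots> = T (-1) (T (- real r) c)" by (simp add: Suc lead_diag_T)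
  also have "\<dots> = T (- real (Suc r)) c" by (simp add: T_comp)
  finally show ?case .
qed

lemma seq_a_T: "real (seq_a r (Suc n)) = T (real r) (\<lambda>k. real (seq_a r k)) n"
  unfolding T_def by (simp add: of_nat_sum)

lemma part2:
  assumes "b 0 = 1" and h: "lead_diag_depth r b = (\<lambda>n. if n = 0 then 1 else b (n - 1))"
  shows "b n = real (seq_a r (n + 1))"
proof (induction n rule: less_induct)
  case (less n)
  let ?d = "(\<lambda>n. if n = 0 then 1 else b (n - 1))"
  have "T (real r) ?d = T (real r) (T (- real r) b)" using h by (simp add: depth_T)
  also have "\<dots> = b" by (simp add: T_comp T_zero)
  finally have bn: "b n = T (real r) ?d n" by simp
  also have "\<dots> = T (real r) (\<lambda>k. real (seq_a r k)) n"
    unfolding T_def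
  proof (rule sum.cong[OF refl])
    fix k assume "k \<in> {..n}"
    hence "?d k = real (seq_a r k)"
      using less[of "k - 1"] by (cases k) auto
    thus "real (n choose k) * real r ^ (n - k) * ?d k
        = real (n choose k) * real r ^ (n - k) * real (seq_a r k)" by simp
  qed
  also have "\<dots> = real (seq_a r (n + 1))" using seq_a_T[of r n] by simp
  finally show ?case .
qed

lemma existence:
  "lead_diag_depth r (\<lambda>n. real (seq_a r (n + 1))) = (\<lambda>n. if n = 0 then 1 else real (seq_a r (n - 1 + 1)))"
proof -
  have e: "(\<lambda>n. real (seq_a r (n + 1))) = T (real r) (\<lambda>k. real (seq_a r k))"
    using seq_a_T by auto
  have "lead_diag_depth r (\<lambda>n. real (seq_a r (n + 1))) = (\<lambda>k. real (seq_a r k))"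
    unfolding e depth_T by (simp add: T_comp T_zero)
  thus ?thesis by (auto simp: fun_eq_iff)
qed

lemma bell_eq: "seq_a 1 n = bell n"
proof (induction n rule: less_induct)
  case (less n)
  show ?case
  proof (cases n)
    case (Suc m)
    thus ?thesis using less by (auto intro: sum.cong)
  qed simp
qed

theorem mainTheorem2:
  fixes r :: nat
  assumes "r \<ge> 1"
  shows "(\<exists>!b :: nat \<Rightarrow> real. b 0 = 1 \<and>
            lead_diag_depth r b = (\<lambda>n. if n = 0 then 1 else b (n - 1)))
       \<and> (\<forall>b :: nat \<Rightarrow> real. b 0 = 1 \<and>
            lead_diag_depth r b = (\<lambda>n. if n = 0 then 1 else b (n - 1))
            \<longrightarrow> (\<forall>n. b n = real (seq_a r (n + 1))))
       \<and> (r = 1 \<longrightarrow> (\<forall>n. seq_a r (n + 1) = bell (n + 1)))"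
proof (intro conjI)
  show "\<exists>!b :: nat \<Rightarrow> real. b 0 = 1 \<and>
            lead_diag_depth r b = (\<lambda>n. if n = 0 then 1 else b (n - 1))"
  proof (rule ex1I[of _ "\<lambda>n. real (seq_a r (n + 1))"])
    show "(\<lambda>n. real (seq_a r (n + 1))) 0 = 1 \<and> lead_diag_depth r (\<lambda>n. real (seq_a r (n + 1))) =
        (\<lambda>n. if n = 0 then 1 else (\<lambda>n. real (seq_a r (n + 1))) (n - 1))"
      using existence[of r] by simp
  next
    fix b :: "nat \<Rightarrow> real"
    assume "b 0 = 1 \<and> lead_diag_depth r b = (\<lambda>n. if n = 0 then 1 else b (n - 1))"
    thus "b = (\<lambda>n. real (seq_a r (n + 1)))" using part2[of b r] by auto
  qed
  show "\<forall>b :: nat \<Rightarrow> real. b 0 = 1 \<and>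
            lead_diag_depth r b = (\<lambda>n. if n = 0 then 1 else b (n - 1))
            \<longrightarrow> (\<forall>n. b n = real (seq_a r (n + 1)))"
    using part2 by blast
  show "r = 1 \<longrightarrow> (\<forall>n. seq_a r (n + 1) = bell (n + 1))"
    using bell_eq by auto
qed

end
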